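(* In the setting described in the context, suppose that for every $i\in[k]$ and every $(\mathcal F_T)$-stopping time $\tau$ that is almost surely finite, there exist nonnegative random variables $E^+_{i\tau},E^-_{i\tau}$ (not depending on $\beta$) with $\mathbb E[E^+_{i\tau}]\le 1$, $\mathbb E[E^-_{i\tau}]\le 1$, such that for every $\beta\in(0,1)$, almost surely, $\mathbb I\{\theta_i\le L_{i\tau}(\beta)\}\le\mathbb I\{E^-_{i\tau}\ge 1/\beta\}$ and $\mathbb I\{\theta_i\ge U_{i\tau}(\beta)\}\le\mathbb I\{E^+_{i\tau}\ge 1/\beta\}$. Then for every $\alpha\in(0,1)$ and every almost surely finite $(\mathcal F_T)$-stopping time $\tau$, with $\tilde\alpha=\alpha|\hat{\mathcal S}_\tau|/(2k)$, we have $\mathrm{sFCR}(\tilde\alpha)\le\alpha$.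
   Context: Setting: $(\Omega,\mathcal F,\mathbb P)$ is a probability space with a filtration $(\mathcal F_T)_{T\in\mathbb N}$; $k\ge2$, $m\in\{1,\dots,k-1\}$, $\alpha\in(0,1)$; $\theta_1\ge\dots\ge\theta_k$ are real parameters; $[k]=\{1,\dots,k\}$. For each $i\in[k]$ and $\beta\in(0,1)$, $(L_{iT}(\beta))_{T}$ and $(U_{iT}(\beta))_T$ are $(\mathcal F_T)$-adapted processes with values in $[-\infty,\infty]$, with $L_{iT}(\beta)\le U_{iT}(\beta)$, satisfying $\mathbb P(\exists T\in\mathbb N:\theta_i\le L_{iT}(\beta))\le\beta$ and $\mathbb P(\exists T\in\mathbb N:\theta_i\ge U_{iT}(\beta))\le\beta$. SCS procedure: set $\alpha_{km}=\alpha/\{2m(k-m)\}$, $\hat{\mathcal S}_0=[k]$, and for $T\in\mathbb N$ let $L^{(m)}_T(\alpha_{km})$ be the $m$-th largest among $\{L_{iT}(\alpha_{km}):i\in\hat{\mathcal S}_{T-1}\}$ and $\hat{\mathcal S}_T=\hat{\mathcal S}_{T-1}\setminus\{i\in\hat{\mathcal S}_{T-1}:U_{iT}(\alpha_{km})<L^{(m)}_T(\alpha_{km})\}$. Stopped false coverage rate: for a stopping time $\tau$ and a (possibly random, $\mathcal F_\tau$-measurable) level $a$, $\mathrm{sFCR}(a)=\mathbb E\Big[\sum_{i\in\hat{\mathcal S}_\tau}\frac{\mathbb I\{\theta_i\notin(L_{i\tau}(a),U_{i\tau}(a))\}}{|\hat{\mathcal S}_\tau|}\Big]$. *)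

theory Defs
  imports "HOL-Probability.Probability"
begin

definition is_filtration :: "'a measure \<Rightarrow> (nat \<Rightarrow> 'a measure) \<Rightarrow> bool" where
  "is_filtration M F \<longleftrightarrow>
     (\<forall>T. space (F T) = space M \<and> sets (F T) \<subseteq> sets M) \<and>
     (\<forall>S T. S \<le> T \<longrightarrow> sets (F S) \<subseteq> sets (F T))"

definition is_stopping_time :: "'a measure \<Rightarrow> (nat \<Rightarrow> 'a measure) \<Rightarrow> ('a \<Rightarrow> enat) \<Rightarrow> bool" where
  "is_stopping_time M F \<tau> \<longleftrightarrow>
     (\<forall>\<omega>\<in>space M. 1 \<le> \<tau> \<omega>) \<and>
     (\<forall>T. {\<omega>\<in>space M. \<tau> \<omega> \<le> enat T} \<in> sets (F T))"

definition stopped :: "(nat \<Rightarrow> 'a \<Rightarrow> 'b) \<Rightarrow> ('a \<Rightarrow> enat) \<Rightarrow> 'a \<Rightarrow> 'b" where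
  "stopped X \<tau> \<omega> = X (the_enat (\<tau> \<omega>)) \<omega>"

definition mth_largest :: "nat \<Rightarrow> nat set \<Rightarrow> (nat \<Rightarrow> ereal) \<Rightarrow> ereal" where
  "mth_largest m S f = rev (sort (map f (sorted_list_of_set S))) ! (m - 1)"

text \<open>The SCS procedure: Shat k m a L U T \<omega> is the selected set after step T,
  with L i T a \<omega>, U i T a \<omega> the bounds of arm i at time T and level a.\<close>
fun Shat :: "nat \<Rightarrow> nat \<Rightarrow> real \<Rightarrow> (nat \<Rightarrow> nat \<Rightarrow> real \<Rightarrow> 'a \<Rightarrow> ereal)
              \<Rightarrow> (nat \<Rightarrow> nat \<Rightarrow> real \<Rightarrow> 'a \<Rightarrow> ereal) \<Rightarrow> nat \<Rightarrow> 'a \<Rightarrow> nat set" where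
  "Shat k m a L U 0 \<omega> = {1..k}"
| "Shat k m a L U (Suc T) \<omega> =
     (let S = Shat k m a L U T \<omega>;
          Lm = mth_largest m S (\<lambda>i. L i (Suc T) a \<omega>)
      in {i \<in> S. \<not> (U i (Suc T) a \<omega> < Lm)})"

end

theory Submission imports Defs begin

lemma Shat_sub: "Shat k m a L U T \<omega> \<subseteq> {1..k}"
  by (induction T) (auto simp: Let_def)

lemma ind_markov:
  fixes E' :: "'a \<Rightarrow> real" and b :: real
  assumes "0 < b" "0 \<le> E' \<omega>"
  shows "(indicator {\<omega>. E' \<omega> \<ge> 1 / b} \<omega> :: real) \<le> b * E' \<omega>"
proof (cases "E' \<omega> \<ge> 1 / b")
  case True
  then have "b * (1/b) \<le> b * E' \<omega>" using assms by (intro mult_left_mono) auto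
  then show ?thesis using True assms by simp
next
  case False
  then have "0 \<le> E' \<omega>" using assms
    by (smt (verit, ccfv_SIG) divide_pos_pos)
  then show ?thesis using False assms by simp
qed

lemma pw:
  fixes \<theta> :: "nat \<Rightarrow> real" and Lf Uf :: "nat \<Rightarrow> real \<Rightarrow> 'a \<Rightarrow> ereal"
    and Ep Em :: "nat \<Rightarrow> 'a \<Rightarrow> real" and S :: "'a \<Rightarrow> nat set"
  assumes S: "S \<omega> \<subseteq> {1..k}" and \<alpha>: "0 < \<alpha>"
    and nn: "\<forall>i\<in>{1..k}. 0 \<le> Ep i \<omega> \<and> 0 \<le> Em i \<omega>"
    and H: "\<forall>i\<in>{1..k}. \<forall>j\<in>{1..k}.
        indicator {\<omega>. ereal (\<theta> i) \<le> Lf i (\<alpha> * real j / (2 * real k)) \<omega>} \<omega>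
          \<le> (indicator {\<omega>. Em i \<omega> \<ge> 1 / (\<alpha> * real j / (2 * real k))} \<omega> :: real) \<and>
        indicator {\<omega>. ereal (\<theta> i) \<ge> Uf i (\<alpha> * real j / (2 * real k)) \<omega>} \<omega>
          \<le> (indicator {\<omega>. Ep i \<omega> \<ge> 1 / (\<alpha> * real j / (2 * real k))} \<omega> :: real)"
  shows "(\<Sum>i\<in>S \<omega>. indicator {\<omega>. ereal (\<theta> i) \<notin>
            {Lf i (\<alpha> * real (card (S \<omega>)) / (2 * real k)) \<omega> <..< Uf i (\<alpha> * real (card (S \<omega>)) / (2 * real k)) \<omega>}} \<omega>
            / real (card (S \<omega>)))
         \<le> (\<Sum>i\<in>{1..k}. \<alpha> / (2 * real k) * (Em i \<omega> + Ep i \<omega>))"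
proof -
  have nn2: "0 \<le> (\<Sum>i\<in>{1..k}. \<alpha> / (2 * real k) * (Em i \<omega> + Ep i \<omega>))"
    using nn \<alpha> by (intro sum_nonneg) auto
  have finS: "finite (S \<omega>)" using S finite_subset by blast
  show ?thesis
  proof (cases "card (S \<omega>) = 0")
    case True
    then have "S \<omega> = {}" using finS by simp
    then show ?thesis using nn2 by simp
  next
    case False
    define s where "s = card (S \<omega>)"
    have s1: "1 \<le> s" using False s_def by simp
    have sk: "s \<le> k" using card_mono[OF _ S] s_def by simp
    define b where "b = \<alpha> * real s / (2 * real k)"
    have bpos: "0 < b" using s1 sk \<alpha> b_def by simp
    have "(\<Sum>i\<in>S \<omega>. indicator {\<omega>. ereal (\<theta> i) \<notin>
            {Lf i b \<omega> <..< Uf i b \<omega>}} \<omega> / real s)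
         \<le> (\<Sum>i\<in>S \<omega>. \<alpha> / (2 * real k) * (Em i \<omega> + Ep i \<omega>))"
    proof (rule sum_mono)
      fix i assume i: "i \<in> S \<omega>"
      then have ik: "i \<in> {1..k}" using S by blast
      have sK: "s \<in> {1..k}" using s1 sk by simp
      have h: "indicator {\<omega>. ereal (\<theta> i) \<le> Lf i b \<omega>} \<omega>
          \<le> (indicator {\<omega>. Em i \<omega> \<ge> 1 / b} \<omega> :: real) \<and>
        indicator {\<omega>. ereal (\<theta> i) \<ge> Uf i b \<omega>} \<omega>
          \<le> (indicator {\<omega>. Ep i \<omega> \<ge> 1 / b} \<omega> :: real)"
        using H ik sK unfolding b_def by blast
      have m1: "(indicator {\<omega>. Em i \<omega> \<ge> 1 / b} \<omega> :: real) \<le> b * Em i \<omega>"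
        by (rule ind_markov[OF bpos]) (use nn ik in auto)
      have m2: "(indicator {\<omega>. Ep i \<omega> \<ge> 1 / b} \<omega> :: real) \<le> b * Ep i \<omega>"
        by (rule ind_markov[OF bpos]) (use nn ik in auto)
      have "(indicator {\<omega>. ereal (\<theta> i) \<notin> {Lf i b \<omega> <..< Uf i b \<omega>}} \<omega> :: real)
          \<le> indicator {\<omega>. ereal (\<theta> i) \<le> Lf i b \<omega>} \<omega> + indicator {\<omega>. ereal (\<theta> i) \<ge> Uf i b \<omega>} \<omega>"
        by (auto simp: indicator_def not_less)
      also have "\<dots> \<le> b * (Em i \<omega> + Ep i \<omega>)" using h m1 m2 by (simp add: algebra_simps)
      finally have "(indicator {\<omega>. ereal (\<theta> i) \<notin> {Lf i b \<omega> <..< Uf i b \<omega>}} \<omega> :: real) / real s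
          \<le> b * (Em i \<omega> + Ep i \<omega>) / real s" using s1 by (simp add: divide_right_mono)
      also have "\<dots> = \<alpha> / (2 * real k) * (Em i \<omega> + Ep i \<omega>)" using s1 unfolding b_def by simp
      finally show "(indicator {\<omega>. ereal (\<theta> i) \<notin> {Lf i b \<omega> <..< Uf i b \<omega>}} \<omega> :: real) / real s
          \<le> \<alpha> / (2 * real k) * (Em i \<omega> + Ep i \<omega>)" .
    qed
    also have "\<dots> \<le> (\<Sum>i\<in>{1..k}. \<alpha> / (2 * real k) * (Em i \<omega> + Ep i \<omega>))"
      using S nn \<alpha> by (intro sum_mono2) auto
    finally show ?thesis by (simp add: s_def b_def indicator_def)
  qed
qed

lemma intbound:
  fixes Ep Em :: "nat \<Rightarrow> 'a \<Rightarrow> real" and \<alpha> :: real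
  assumes meas: "\<forall>i\<in>{1..k}. Ep i \<in> borel_measurable M \<and> Em i \<in> borel_measurable M"
    and nn: "\<forall>i\<in>{1..k}. \<forall>\<omega>\<in>space M. 0 \<le> Ep i \<omega> \<and> 0 \<le> Em i \<omega>"
    and ip: "\<forall>i\<in>{1..k}. (\<integral>\<^sup>+ \<omega>. ennreal (Ep i \<omega>) \<partial>M) \<le> 1"
    and im: "\<forall>i\<in>{1..k}. (\<integral>\<^sup>+ \<omega>. ennreal (Em i \<omega>) \<partial>M) \<le> 1"
    and \<alpha>: "0 < \<alpha>" and k: "1 \<le> k"
  shows "(\<integral>\<^sup>+ \<omega>. ennreal (\<Sum>i\<in>{1..k}. \<alpha> / (2 * real k) * (Em i \<omega> + Ep i \<omega>)) \<partial>M) \<le> ennreal \<alpha>"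
proof -
  define c where "c = \<alpha> / (2 * real k)"
  have c0: "0 \<le> c" using \<alpha> k c_def by simp
  have "(\<integral>\<^sup>+ \<omega>. ennreal (\<Sum>i\<in>{1..k}. c * (Em i \<omega> + Ep i \<omega>)) \<partial>M)
      = (\<integral>\<^sup>+ \<omega>. (\<Sum>i\<in>{1..k}. ennreal c * (ennreal (Em i \<omega>) + ennreal (Ep i \<omega>))) \<partial>M)"
  proof (rule nn_integral_cong)
    fix \<omega> assume w: "\<omega> \<in> space M"
    have "ennreal (\<Sum>i\<in>{1..k}. c * (Em i \<omega> + Ep i \<omega>)) = (\<Sum>i\<in>{1..k}. ennreal (c * (Em i \<omega> + Ep i \<omega>)))"
      using nn w c0 by (intro sum_ennreal[symmetric]) auto
    also have "\<dots> = (\<Sum>i\<in>{1..k}. ennreal c * (ennreal (Em i \<omega>) + ennreal (Ep i \<omega>)))"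
      using nn w c0 by (intro sum.cong refl) (simp add: ennreal_mult)
    finally show "ennreal (\<Sum>i\<in>{1..k}. c * (Em i \<omega> + Ep i \<omega>)) = (\<Sum>i\<in>{1..k}. ennreal c * (ennreal (Em i \<omega>) + ennreal (Ep i \<omega>)))" .
  qed
  also have "\<dots> = (\<Sum>i\<in>{1..k}. ennreal c * ((\<integral>\<^sup>+ \<omega>. ennreal (Em i \<omega>) \<partial>M) + (\<integral>\<^sup>+ \<omega>. ennreal (Ep i \<omega>) \<partial>M)))"
  proof -
    have mE: "\<And>i. i \<in> {1..k} \<Longrightarrow> (\<lambda>\<omega>. ennreal (Em i \<omega>)) \<in> borel_measurable M"
      using meas by (intro measurable_compose[OF _ measurable_ennreal]) auto
    have mP: "\<And>i. i \<in> {1..k} \<Longrightarrow> (\<lambda>\<omega>. ennreal (Ep i \<omega>)) \<in> borel_measurable M"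
      using meas by (intro measurable_compose[OF _ measurable_ennreal]) auto
    have "(\<integral>\<^sup>+ \<omega>. (\<Sum>i\<in>{1..k}. ennreal c * (ennreal (Em i \<omega>) + ennreal (Ep i \<omega>))) \<partial>M)
       = (\<Sum>i\<in>{1..k}. (\<integral>\<^sup>+ \<omega>. ennreal c * (ennreal (Em i \<omega>) + ennreal (Ep i \<omega>)) \<partial>M))"
      using mE mP by (intro nn_integral_sum) auto
    also have "\<dots> = (\<Sum>i\<in>{1..k}. ennreal c * ((\<integral>\<^sup>+ \<omega>. ennreal (Em i \<omega>) \<partial>M) + (\<integral>\<^sup>+ \<omega>. ennreal (Ep i \<omega>) \<partial>M)))"
    proof (rule sum.cong[OF refl])
      fix i assume i: "i \<in> {1..k}"
      show "(\<integral>\<^sup>+ \<omega>. ennreal c * (ennreal (Em i \<omega>) + ennreal (Ep i \<omega>)) \<partial>M) = ennreal c * ((\<integral>\<^sup>+ \<omega>. ennreal (Em i \<omega>) \<partial>M) + (\<integral>\<^sup>+ \<omega>. ennreal (Ep i \<omega>) \<partial>M))"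
        using mE[OF i] mP[OF i] by (simp add: nn_integral_cmult nn_integral_add)
    qed
    finally show ?thesis .
  qed
  also have "\<dots> \<le> (\<Sum>i\<in>{1..k}. ennreal c * 2)"
  proof (rule sum_mono)
    fix i assume "i \<in> {1..k}"
    then have "(\<integral>\<^sup>+ \<omega>. ennreal (Em i \<omega>) \<partial>M) + (\<integral>\<^sup>+ \<omega>. ennreal (Ep i \<omega>) \<partial>M) \<le> 1 + 1"
      using ip im by (intro add_mono) auto
    then show "ennreal c * ((\<integral>\<^sup>+ \<omega>. ennreal (Em i \<omega>) \<partial>M) + (\<integral>\<^sup>+ \<omega>. ennreal (Ep i \<omega>) \<partial>M)) \<le> ennreal c * 2"
      by (intro mult_left_mono) auto
  qed
  also have "\<dots> = ennreal (real k * c * 2)"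
    using c0 by (simp add: ennreal_mult ennreal_of_nat_eq_real_of_nat mult.assoc)
  also have "real k * c * 2 = \<alpha>" using k unfolding c_def by simp
  finally show ?thesis unfolding c_def .
qed

theorem theorem2:
  fixes M :: "'a measure" and F :: "nat \<Rightarrow> 'a measure"
    and k m :: nat and \<theta> :: "nat \<Rightarrow> real"
    and L U :: "nat \<Rightarrow> nat \<Rightarrow> real \<Rightarrow> 'a \<Rightarrow> ereal"
  assumes M: "prob_space M"
    and F: "is_filtration M F"
    and k: "2 \<le> k" and m: "1 \<le> m" "m \<le> k - 1"
    and \<theta>_ord: "\<And>i j. 1 \<le> i \<Longrightarrow> i \<le> j \<Longrightarrow> j \<le> k \<Longrightarrow> \<theta> j \<le> \<theta> i"
    and adaptL: "\<And>i T \<beta>. i \<in> {1..k} \<Longrightarrow> 1 \<le> T \<Longrightarrow> 0 < \<beta> \<Longrightarrow> \<beta> < 1 \<Longrightarrow>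
                   L i T \<beta> \<in> borel_measurable (F T)"
    and adaptU: "\<And>i T \<beta>. i \<in> {1..k} \<Longrightarrow> 1 \<le> T \<Longrightarrow> 0 < \<beta> \<Longrightarrow> \<beta> < 1 \<Longrightarrow>
                   U i T \<beta> \<in> borel_measurable (F T)"
    and LU: "\<And>i T \<beta> \<omega>. i \<in> {1..k} \<Longrightarrow> 1 \<le> T \<Longrightarrow> 0 < \<beta> \<Longrightarrow> \<beta> < 1 \<Longrightarrow>
                   \<omega> \<in> space M \<Longrightarrow> L i T \<beta> \<omega> \<le> U i T \<beta> \<omega>"
    and csL: "\<And>i \<beta>. i \<in> {1..k} \<Longrightarrow> 0 < \<beta> \<Longrightarrow> \<beta> < 1 \<Longrightarrow>
                   measure M {\<omega> \<in> space M. \<exists>T\<ge>1. ereal (\<theta> i) \<le> L i T \<beta> \<omega>} \<le> \<beta>"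
    and csU: "\<And>i \<beta>. i \<in> {1..k} \<Longrightarrow> 0 < \<beta> \<Longrightarrow> \<beta> < 1 \<Longrightarrow>
                   measure M {\<omega> \<in> space M. \<exists>T\<ge>1. ereal (\<theta> i) \<ge> U i T \<beta> \<omega>} \<le> \<beta>"
    and evalues: "\<And>i \<tau>. i \<in> {1..k} \<Longrightarrow> is_stopping_time M F \<tau> \<Longrightarrow>
                   (AE \<omega> in M. \<tau> \<omega> \<noteq> \<infinity>) \<Longrightarrow>
                   \<exists>Ep Em :: 'a \<Rightarrow> real.
                      Ep \<in> borel_measurable M \<and> Em \<in> borel_measurable M \<and>
                      (\<forall>\<omega>\<in>space M. 0 \<le> Ep \<omega> \<and> 0 \<le> Em \<omega>) \<and>
                      (\<integral>\<^sup>+ \<omega>. ennreal (Ep \<omega>) \<partial>M) \<le> 1 \<and>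
                      (\<integral>\<^sup>+ \<omega>. ennreal (Em \<omega>) \<partial>M) \<le> 1 \<and>
                      (\<forall>\<beta>. 0 < \<beta> \<longrightarrow> \<beta> < 1 \<longrightarrow>
                         (AE \<omega> in M.
                            indicator {\<omega>. ereal (\<theta> i) \<le> stopped (\<lambda>T. L i T \<beta>) \<tau> \<omega>} \<omega>
                              \<le> (indicator {\<omega>. Em \<omega> \<ge> 1 / \<beta>} \<omega> :: real) \<and>
                            indicator {\<omega>. ereal (\<theta> i) \<ge> stopped (\<lambda>T. U i T \<beta>) \<tau> \<omega>} \<omega>
                              \<le> (indicator {\<omega>. Ep \<omega> \<ge> 1 / \<beta>} \<omega> :: real)))"
  shows "\<forall>\<alpha> \<tau>. 0 < \<alpha> \<longrightarrow> \<alpha> < 1 \<longrightarrow> is_stopping_time M F \<tau> \<longrightarrow>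
           (AE \<omega> in M. \<tau> \<omega> \<noteq> \<infinity>) \<longrightarrow>
           (let \<alpha>km = \<alpha> / (2 * real m * real (k - m));
                S = (\<lambda>\<omega>. stopped (Shat k m \<alpha>km L U) \<tau> \<omega>);
                \<alpha>t = (\<lambda>\<omega>. \<alpha> * real (card (S \<omega>)) / (2 * real k))
            in (\<integral>\<^sup>+ \<omega>. ennreal (\<Sum>i\<in>S \<omega>.
                   indicator {\<omega>. ereal (\<theta> i) \<notin>
                       {stopped (\<lambda>T. L i T (\<alpha>t \<omega>)) \<tau> \<omega> <..< stopped (\<lambda>T. U i T (\<alpha>t \<omega>)) \<tau> \<omega>}} \<omega>
                   / real (card (S \<omega>))) \<partial>M) \<le> ennreal \<alpha>)"
proof (intro allI impI)
  fix \<alpha> :: real and \<tau> :: "'a \<Rightarrow> enat"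
  assume a0: "0 < \<alpha>" and a1: "\<alpha> < 1" and st: "is_stopping_time M F \<tau>"
    and fin: "AE \<omega> in M. \<tau> \<omega> \<noteq> \<infinity>"
  define G where "G = (\<lambda>i (Ep :: 'a \<Rightarrow> real) (Em :: 'a \<Rightarrow> real).
                      Ep \<in> borel_measurable M \<and> Em \<in> borel_measurable M \<and>
                      (\<forall>\<omega>\<in>space M. 0 \<le> Ep \<omega> \<and> 0 \<le> Em \<omega>) \<and>
                      (\<integral>\<^sup>+ \<omega>. ennreal (Ep \<omega>) \<partial>M) \<le> 1 \<and>
                      (\<integral>\<^sup>+ \<omega>. ennreal (Em \<omega>) \<partial>M) \<le> 1 \<and>
                      (\<forall>\<beta>. 0 < \<beta> \<longrightarrow> \<beta> < 1 \<longrightarrow>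
                         (AE \<omega> in M.
                            indicator {\<omega>. ereal (\<theta> i) \<le> stopped (\<lambda>T. L i T \<beta>) \<tau> \<omega>} \<omega>
                              \<le> (indicator {\<omega>. Em \<omega> \<ge> 1 / \<beta>} \<omega> :: real) \<and>
                            indicator {\<omega>. ereal (\<theta> i) \<ge> stopped (\<lambda>T. U i T \<beta>) \<tau> \<omega>} \<omega>
                              \<le> (indicator {\<omega>. Ep \<omega> \<ge> 1 / \<beta>} \<omega> :: real))))"
  have "\<forall>i\<in>{1..k}. \<exists>Ep. \<exists>Em. G i Ep Em"
    using evalues[OF _ st fin] unfolding G_def by blast
  then obtain Ep where "\<forall>i\<in>{1..k}. \<exists>Em. G i (Ep i) Em" by (metis bchoice)
  then obtain Em where EE: "\<forall>i\<in>{1..k}. G i (Ep i) (Em i)" by (metis bchoice)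
  have meas: "\<forall>i\<in>{1..k}. Ep i \<in> borel_measurable M \<and> Em i \<in> borel_measurable M"
    and nn: "\<forall>i\<in>{1..k}. \<forall>\<omega>\<in>space M. 0 \<le> Ep i \<omega> \<and> 0 \<le> Em i \<omega>"
    and ip: "\<forall>i\<in>{1..k}. (\<integral>\<^sup>+ \<omega>. ennreal (Ep i \<omega>) \<partial>M) \<le> 1"
    and im: "\<forall>i\<in>{1..k}. (\<integral>\<^sup>+ \<omega>. ennreal (Em i \<omega>) \<partial>M) \<le> 1"
    using EE unfolding G_def by auto
  have AEH: "AE \<omega> in M. \<forall>i\<in>{1..k}. \<forall>j\<in>{1..k}.
        indicator {\<omega>. ereal (\<theta> i) \<le> stopped (\<lambda>T. L i T (\<alpha> * real j / (2 * real k))) \<tau> \<omega>} \<omega>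
          \<le> (indicator {\<omega>. Em i \<omega> \<ge> 1 / (\<alpha> * real j / (2 * real k))} \<omega> :: real) \<and>
        indicator {\<omega>. ereal (\<theta> i) \<ge> stopped (\<lambda>T. U i T (\<alpha> * real j / (2 * real k))) \<tau> \<omega>} \<omega>
          \<le> (indicator {\<omega>. Ep i \<omega> \<ge> 1 / (\<alpha> * real j / (2 * real k))} \<omega> :: real)"
  proof (intro AE_finite_allI finite_atLeastAtMost)
    fix i j assume i: "i \<in> {1..k}" and j: "j \<in> {1..k}"
    have b0: "0 < \<alpha> * real j / (2 * real k)" using a0 j by simp
    have "\<alpha> * real j / (2 * real k) \<le> \<alpha> * real k / (2 * real k)"
      using a0 j by (intro divide_right_mono mult_left_mono) auto
    also have "\<dots> = \<alpha> / 2" using j by simp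
    finally have b1: "\<alpha> * real j / (2 * real k) < 1" using a1 by simp
    show "AE \<omega> in M.
        indicator {\<omega>. ereal (\<theta> i) \<le> stopped (\<lambda>T. L i T (\<alpha> * real j / (2 * real k))) \<tau> \<omega>} \<omega>
          \<le> (indicator {\<omega>. Em i \<omega> \<ge> 1 / (\<alpha> * real j / (2 * real k))} \<omega> :: real) \<and>
        indicator {\<omega>. ereal (\<theta> i) \<ge> stopped (\<lambda>T. U i T (\<alpha> * real j / (2 * real k))) \<tau> \<omega>} \<omega>
          \<le> (indicator {\<omega>. Ep i \<omega> \<ge> 1 / (\<alpha> * real j / (2 * real k))} \<omega> :: real)"
      using EE i b0 b1 unfolding G_def by blast
  qed
  define S where "S = (\<lambda>\<omega>. stopped (Shat k m (\<alpha> / (2 * real m * real (k - m))) L U) \<tau> \<omega>)"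
  have Ssub: "\<And>\<omega>. S \<omega> \<subseteq> {1..k}" unfolding S_def stopped_def by (rule Shat_sub)
  have "AE \<omega> in M. ennreal (\<Sum>i\<in>S \<omega>. indicator {\<omega>. ereal (\<theta> i) \<notin>
            {stopped (\<lambda>T. L i T (\<alpha> * real (card (S \<omega>)) / (2 * real k))) \<tau> \<omega> <..<
             stopped (\<lambda>T. U i T (\<alpha> * real (card (S \<omega>)) / (2 * real k))) \<tau> \<omega>}} \<omega>
            / real (card (S \<omega>)))
         \<le> ennreal (\<Sum>i\<in>{1..k}. \<alpha> / (2 * real k) * (Em i \<omega> + Ep i \<omega>))"
    using AEH AE_space
  proof eventually_elim
    case (elim \<omega>)
    show ?case
      by (rule ennreal_leI, rule pw[where Lf = "\<lambda>i \<beta> \<omega>. stopped (\<lambda>T. L i T \<beta>) \<tau> \<omega>"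
            and Uf = "\<lambda>i \<beta> \<omega>. stopped (\<lambda>T. U i T \<beta>) \<tau> \<omega>" and S = S])
         (use Ssub a0 nn elim in auto)
  qed
  then have "(\<integral>\<^sup>+ \<omega>. ennreal (\<Sum>i\<in>S \<omega>. indicator {\<omega>. ereal (\<theta> i) \<notin>
            {stopped (\<lambda>T. L i T (\<alpha> * real (card (S \<omega>)) / (2 * real k))) \<tau> \<omega> <..<
             stopped (\<lambda>T. U i T (\<alpha> * real (card (S \<omega>)) / (2 * real k))) \<tau> \<omega>}} \<omega>
            / real (card (S \<omega>))) \<partial>M)
         \<le> (\<integral>\<^sup>+ \<omega>. ennreal (\<Sum>i\<in>{1..k}. \<alpha> / (2 * real k) * (Em i \<omega> + Ep i \<omega>)) \<partial>M)"
    by (rule nn_integral_mono_AE)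
  also have "\<dots> \<le> ennreal \<alpha>"
    by (rule intbound[OF meas nn ip im a0]) (use k in simp)
  finally show "let \<alpha>km = \<alpha> / (2 * real m * real (k - m));
                S = (\<lambda>\<omega>. stopped (Shat k m \<alpha>km L U) \<tau> \<omega>);
                \<alpha>t = (\<lambda>\<omega>. \<alpha> * real (card (S \<omega>)) / (2 * real k))
            in (\<integral>\<^sup>+ \<omega>. ennreal (\<Sum>i\<in>S \<omega>.
                   indicator {\<omega>. ereal (\<theta> i) \<notin>
                       {stopped (\<lambda>T. L i T (\<alpha>t \<omega>)) \<tau> \<omega> <..< stopped (\<lambda>T. U i T (\<alpha>t \<omega>)) \<tau> \<omega>}} \<omega>
                   / real (card (S \<omega>))) \<partial>M) \<le> ennreal \<alpha>"
    unfolding Let_def S_def by simp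
qed

end
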